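(* Let $n = M\times N\ge 2$ and let $m_1, m_2$ be positive integers. Let $\sigma_0,\sigma_1,\sigma_2$ be arbitrary permutations of $\{1,2,\ldots,n\}$ (these are the inverse pre-, mid- and post-permutations $f_{S0}^{-1}, f_{S1}^{-1}, f_{S2}^{-1}$ of a five-stage permutation–diffusion–permutation–diffusion–permutation cipher). For each plaintext position $k\in\{1,\ldots,n\}$ define the associated set of ciphertext positions $$A_k=\bigl\{\sigma_2\bigl(\sigma_1(\sigma_0(k)-i)-j\bigr)\;:\;0\le i\le m_1,\ 0\le j\le m_2,\ \sigma_0(k)-i\ge 1,\ \sigma_1(\sigma_0(k)-i)-j\ge 1\bigr\}.$$ Then the family $\{A_k\}_{k=1}^{n}$ contains a complete chain of length $n$: there is an ordering $k_1,k_2,\ldots,k_n$ of $\{1,\ldots,n\}$ (i.e. a bijection $t\mapsto k_t$) such that $A_{k_t}\cap A_{k_{t+1}}\neq\emptyset$ for every $t=1,\ldots,n-1$, and for every $t\le n-1$ every element of $A_{k_t}$ belongs to $A_{k_{t-1}}\cap A_{k_t}$ (when $t\ge 2$) or to $A_{k_t}\cap A_{k_{t+1}}$.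
   Context: This formalizes the paper's "associated position expression" for a five-stage plaintext non-delayed chaotic cipher: decryption is $P(k)=f_{D1}^{-1}(\ldots)$ in which plaintext pixel $P(k)$ depends exactly on the ciphertext pixels $C(p)$ with $p\in A_k$ (positions $\le 0$ correspond to fixed initial conditions and are not ciphertext pixels, hence are excluded). A chain is a sequence of sets (nodes) in which every two adjacent sets have nonempty intersection; the first node is the chain head and the last the chain tail. A complete chain of length $n$ is a chain that uses all $n$ sets, in which every element of every node other than the tail lies in the intersection of that node with an adjacent node. *)

theory Defs
  imports Main
begin

text \<open>Positions are natural numbers; the guards "s0 k - i \<ge> 1" etc. are exactly
  the paper's conditions (for nat, a - b \<ge> 1 iff a > b, so truncation never
  matters).\<close>
definition assoc_set ::
  "(nat \<Rightarrow> nat) \<Rightarrow> (nat \<Rightarrow> nat) \<Rightarrow> (nat \<Rightarrow> nat) \<Rightarrow> nat \<Rightarrow> nat \<Rightarrow> nat \<Rightarrow> nat set" where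
  "assoc_set s0 s1 s2 m1 m2 k =
     {s2 (s1 (s0 k - i) - j) | i j.
        i \<le> m1 \<and> j \<le> m2 \<and> s0 k - i \<ge> 1 \<and> s1 (s0 k - i) - j \<ge> 1}"

definition has_complete_chain :: "(nat \<Rightarrow> 'a set) \<Rightarrow> nat \<Rightarrow> bool" where
  "has_complete_chain A n \<longleftrightarrow>
     (\<exists>ks. bij_betw ks {1..n} {1..n} \<and>
        (\<forall>t. 1 \<le> t \<and> t \<le> n - 1 \<longrightarrow> A (ks t) \<inter> A (ks (t + 1)) \<noteq> {}) \<and>
        (\<forall>t. 1 \<le> t \<and> t \<le> n - 1 \<longrightarrow>
           (\<forall>x \<in> A (ks t).
              (2 \<le> t \<and> x \<in> A (ks (t - 1)) \<inter> A (ks t)) \<or>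
              x \<in> A (ks t) \<inter> A (ks (t + 1)))))"

end

theory Submission
  imports Defs
begin

lemma mem_assoc:
  "x \<in> assoc_set s0 s1 s2 m1 m2 k \<longleftrightarrow>
   (\<exists>i j. x = s2 (s1 (s0 k - i) - j) \<and> i \<le> m1 \<and> j \<le> m2 \<and> s0 k - i \<ge> 1 \<and> s1 (s0 k - i) - j \<ge> 1)"
  unfolding assoc_set_def by blast

theorem theorem1:
  fixes M N n m1 m2 :: nat and s0 s1 s2 :: "nat \<Rightarrow> nat"
  assumes "n = M * N" and "n \<ge> 2"
    and "m1 > 0" and "m2 > 0"
    and "bij_betw s0 {1..n} {1..n}"
    and "bij_betw s1 {1..n} {1..n}"
    and "bij_betw s2 {1..n} {1..n}"
  shows "has_complete_chain (assoc_set s0 s1 s2 m1 m2) n"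
proof -
  define ks where "ks = inv_into {1..n} s0"
  have bij: "bij_betw ks {1..n} {1..n}" unfolding ks_def
    using assms(5) bij_betw_inv_into by blast
  have s0ks: "s0 (ks t) = t" if "t \<in> {1..n}" for t
    unfolding ks_def using assms(5) that
    by (metis bij_betw_imp_surj_on f_inv_into_f)
  let ?A = "assoc_set s0 s1 s2 m1 m2"
  have c1: "?A (ks t) \<inter> ?A (ks (t + 1)) \<noteq> {}" if "1 \<le> t" "t \<le> n - 1" for t
  proof -
    have e1: "s0 (ks t) = t" and e2: "s0 (ks (t+1)) = t + 1" using s0ks that by auto
    have "t \<le> n" "1 \<le> t" using that by auto
    hence "s1 t \<in> {1..n}" using assms(6) by (auto simp: bij_betw_def)
    hence "s2 (s1 t - 0) \<in> ?A (ks t)" "s2 (s1 (t + 1 - 1) - 0) \<in> ?A (ks (t+1))"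
      unfolding mem_assoc e1 e2 using that assms(3) by (metis diff_zero atLeastAtMost_iff le0 minus_nat.diff_0 le_add2 less_one not_less not_one_le_zero diff_add_inverse2)+
    thus ?thesis by auto
  qed
  have c2: "(2 \<le> t \<and> x \<in> ?A (ks (t - 1)) \<inter> ?A (ks t)) \<or> x \<in> ?A (ks t) \<inter> ?A (ks (t + 1))"
    if tt: "1 \<le> t" "t \<le> n - 1" "x \<in> ?A (ks t)" for t x
  proof -
    have e1: "s0 (ks t) = t" and e2: "s0 (ks (t+1)) = t + 1" using s0ks that by auto
    obtain i j where ij: "x = s2 (s1 (t - i) - j)" "i \<le> m1" "j \<le> m2" "t - i \<ge> 1" "s1 (t - i) - j \<ge> 1"
      using tt(3) unfolding mem_assoc e1 by blast
    show ?thesis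
    proof (cases "i < m1")
      case True
      have "t + 1 - (i+1) = t - i" using ij by auto
      hence "x \<in> ?A (ks (t+1))" unfolding mem_assoc e2 using ij True
        by (metis Suc_leI add.commute plus_1_eq_Suc)
      then show ?thesis using that by auto
    next
      case False
      hence im: "i = m1" using ij by auto
      have t2: "2 \<le> t" using ij im assms(3) by auto
      hence e0: "s0 (ks (t - 1)) = t - 1" using s0ks tt by (intro s0ks) auto
      have "t - 1 - (i - 1) = t - i" using ij im assms(3) t2 by auto
      hence "x \<in> ?A (ks (t - 1))" unfolding mem_assoc e0 using ij
        by (metis diff_le_self le_trans)
      then show ?thesis using that t2 by auto
    qed
  qed
  show ?thesis unfolding has_complete_chain_def
    using bij c1 c2 by blast
qed

end
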